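(* Let $X$ be a separable real Banach space, $a\in\mathbb{R}$, and $\varphi:X\to[a,\infty)$ a continuous convex function which is not constant on any line (i.e. there are no $x,v\in X$ with $v\ne0$ such that $t\mapsto\varphi(x+tv)$ is constant on $\mathbb{R}$). Then $\varphi$ is essentially directionally coercive: there exists $\xi\in X^*$ such that $\lim_{t\to\infty}\big(\varphi(x+tv)-\langle\xi,x+tv\rangle\big)=\infty$ for every $x\in X$ and every $v\in X\setminus\{0\}$. *)

theory Defs
  imports "HOL-Analysis.Analysis"
begin

end

theory Submission imports Defs begin
definition DG :: "('a::real_vector \<Rightarrow> real) \<Rightarrow> ('a \<times> real) set \<Rightarrow> bool" where
"DG q G \<longleftrightarrow> (0,0) \<in> G \<and> (\<forall>x r y s. (x,r)\<in>G \<longrightarrow> (y,s)\<in>G \<longrightarrow> (x+y, r+s)\<in>G)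
   \<and> (\<forall>x r t. (x,r)\<in>G \<longrightarrow> (t *\<^sub>R x, t*r)\<in>G) \<and> (\<forall>x r. (x,r)\<in>G \<longrightarrow> r \<le> q x)"

lemma DG_chain:
  assumes "C \<in> chains {G. DG q G}" "C \<noteq> {}"
  shows "DG q (\<Union>C)"
proof -
  have sub: "\<And>G. G \<in> C \<Longrightarrow> DG q G" using assms(1) by (auto simp: chains_def)
  have ch: "\<And>G H. G \<in> C \<Longrightarrow> H \<in> C \<Longrightarrow> G \<subseteq> H \<or> H \<subseteq> G"
    using assms(1) by (auto simp: chains_def chain_subset_def)
  show ?thesis unfolding DG_def
  proof (intro conjI allI impI)
    obtain G where "G \<in> C" using assms(2) by blast
    then show "(0,0) \<in> \<Union>C" using sub unfolding DG_def by blast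
  next
    fix x r y s assume a: "(x,r) \<in> \<Union>C" "(y,s) \<in> \<Union>C"
    then obtain G H where G: "G \<in> C" "(x,r)\<in>G" and H: "H\<in>C" "(y,s)\<in>H" by blast
    show "(x+y, r+s) \<in> \<Union>C"
    proof (cases "G \<subseteq> H")
      case True then show ?thesis using sub[OF H(1)] G H unfolding DG_def by blast
    next
      case False then have "H \<subseteq> G" using ch G H by blast
      then show ?thesis using sub[OF G(1)] G H unfolding DG_def by blast
    qed
  next
    fix x r t assume "(x,r) \<in> \<Union>C"
    then show "(t *\<^sub>R x, t*r) \<in> \<Union>C" using sub unfolding DG_def by blast
  next
    fix x r assume "(x,r) \<in> \<Union>C"
    then show "r \<le> q x" using sub unfolding DG_def by blast
  qed
qed

lemma key_ineq:
  fixes q :: "'a::real_vector \<Rightarrow> real"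
  assumes q: "convex_on UNIV q" and M: "DG q M"
    and xr: "(x,r) \<in> M" and ys: "(y,r') \<in> M" and s: "s > 0" and t: "t > 0"
  shows "(r - q (x - s *\<^sub>R z)) / s \<le> (q (y + t *\<^sub>R z) - r') / t"
proof -
  define a where "a = t/(s+t)"
  define b where "b = s/(s+t)"
  have ab: "a = 1 - b" "b \<ge> 0" "b \<le> 1" using s t by (auto simp: a_def b_def field_simps)
  have "(a *\<^sub>R x + b *\<^sub>R y, a*r + b*r') \<in> M" using M xr ys unfolding DG_def by blast
  then have 1: "a*r + b*r' \<le> q (a *\<^sub>R x + b *\<^sub>R y)" using M unfolding DG_def by blast
  have "a *\<^sub>R x + b *\<^sub>R y = (1-b) *\<^sub>R (x - s *\<^sub>R z) + b *\<^sub>R (y + t *\<^sub>R z)"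
  proof -
    define k where "k = b * t - a * s"
    have "(1-b) *\<^sub>R (x - s *\<^sub>R z) + b *\<^sub>R (y + t *\<^sub>R z) = a *\<^sub>R x + b *\<^sub>R y + k *\<^sub>R z"
      unfolding k_def ab(1) by (simp add: algebra_simps)
    moreover have "k = 0" using s t by (simp add: k_def a_def b_def field_simps)
    ultimately show ?thesis by simp
  qed
  then have "q (a *\<^sub>R x + b *\<^sub>R y) \<le> (1-b) * q (x - s *\<^sub>R z) + b * q (y + t *\<^sub>R z)"
    using convex_onD[OF q, of b] ab by simp
  with 1 ab have 2: "a*r + b*r' \<le> a * q (x - s *\<^sub>R z) + b * q (y + t *\<^sub>R z)" by simp
  have "t*r + s*r' \<le> t * q (x - s *\<^sub>R z) + s * q (y + t *\<^sub>R z)"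
  proof -
    have "(s+t) * (a*r + b*r') \<le> (s+t) * (a * q (x - s *\<^sub>R z) + b * q (y + t *\<^sub>R z))"
      using 2 s t by (intro mult_left_mono) auto
    moreover have "(s+t)*a = t" "(s+t)*b = s" using s t by (simp_all add: a_def b_def field_simps)
    moreover have "(s+t) * (a*r + b*r') = ((s+t)*a)*r + ((s+t)*b)*r'"
      "(s+t) * (a * q (x - s *\<^sub>R z) + b * q (y + t *\<^sub>R z)) = ((s+t)*a) * q (x - s *\<^sub>R z) + ((s+t)*b) * q (y + t *\<^sub>R z)"
      by (simp_all add: algebra_simps)
    ultimately show ?thesis by simp
  qed
  then have "t * (r - q (x - s *\<^sub>R z)) \<le> s * (q (y + t *\<^sub>R z) - r')" by (simp add: algebra_simps)
  then show ?thesis using s t by (simp add: field_simps)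
qed

lemma DG_extend:
  fixes q :: "'a::real_vector \<Rightarrow> real"
  assumes q: "convex_on UNIV q" and M: "DG q M"
  shows "\<exists>c. DG q {(x + t *\<^sub>R z, r + t*c) | x r t. (x,r)\<in>M}"
proof -
  define L where "L = {(r - q (x - s *\<^sub>R z)) / s | x r s. (x,r)\<in>M \<and> s > 0}"
  define U where "U = {(q (y + t *\<^sub>R z) - r') / t | y r' t. (y,r')\<in>M \<and> t > 0}"
  have memL: "(r - q (x - s *\<^sub>R z)) / s \<in> L" if "(x,r)\<in>M" "s > 0" for x r s
    unfolding L_def using that by blast
  have memU: "(q (y + t *\<^sub>R z) - r') / t \<in> U" if "(y,r')\<in>M" "t > 0" for y r' t
    unfolding U_def using that by blast
  have M0: "(0,0) \<in> M" using M unfolding DG_def by blast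
  have LU: "l \<le> u" if lL: "l \<in> L" and uU: "u \<in> U" for l u
  proof -
    obtain x r s where l: "l = (r - q (x - s *\<^sub>R z)) / s" "(x,r)\<in>M" "s > 0"
      using lL unfolding L_def by blast
    obtain y r' t where u: "u = (q (y + t *\<^sub>R z) - r') / t" "(y,r')\<in>M" "t > 0"
      using uU unfolding U_def by blast
    show ?thesis unfolding l(1) u(1) by (rule key_ineq[OF q M l(2) u(2) l(3) u(3)])
  qed
  have "(0 - q (0 - 1 *\<^sub>R z)) / 1 \<in> L" by (rule memL[OF M0]) simp
  then have Lne: "L \<noteq> {}" by blast
  have u0: "(q (0 + 1 *\<^sub>R z) - 0) / 1 \<in> U" by (rule memU[OF M0]) simp
  define c where "c = Sup L"
  have bdd: "bdd_above L" unfolding bdd_above_def using LU u0 by blast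
  have cl: "\<And>l. l \<in> L \<Longrightarrow> l \<le> c" unfolding c_def using bdd by (simp add: cSup_upper)
  have cu: "\<And>u. u \<in> U \<Longrightarrow> c \<le> u" unfolding c_def using Lne LU by (meson cSup_least)
  define E where "E = {(x + t *\<^sub>R z, r + t*c) | x r t. (x,r)\<in>M}"
  have memE: "(x + t *\<^sub>R z, r + t*c) \<in> E" if "(x,r)\<in>M" for x r t
    unfolding E_def using that by blast
  have inE: "\<exists>x1 r1 t. p = (x1 + t *\<^sub>R z, r1 + t*c) \<and> (x1,r1)\<in>M" if "p \<in> E" for p
    using that unfolding E_def by blast
  have "DG q E" unfolding DG_def
  proof (intro conjI allI impI)
    show "(0,0) \<in> E" using memE[OF M0, of 0] by simp
  next
    fix x r y s
    assume "(x, r) \<in> E" "(y, s) \<in> E"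
    then obtain x1 r1 t1 x2 r2 t2 where A: "(x,r) = (x1 + t1 *\<^sub>R z, r1 + t1*c)" "(x1,r1)\<in>M"
      "(y,s) = (x2 + t2 *\<^sub>R z, r2 + t2*c)" "(x2,r2)\<in>M" using inE by metis
    have "(x1+x2, r1+r2) \<in> M" using M A unfolding DG_def by blast
    then have "((x1+x2) + (t1+t2) *\<^sub>R z, (r1+r2) + (t1+t2)*c) \<in> E" by (rule memE)
    moreover have "(x + y, r + s) = ((x1+x2) + (t1+t2) *\<^sub>R z, (r1+r2) + (t1+t2)*c)"
      using A by (simp add: algebra_simps)
    ultimately show "(x + y, r + s) \<in> E" by simp
  next
    fix x r u
    assume "(x, r) \<in> E"
    then obtain x1 r1 t1 where A: "(x,r) = (x1 + t1 *\<^sub>R z, r1 + t1*c)" "(x1,r1)\<in>M" using inE by metis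
    have "(u *\<^sub>R x1, u*r1) \<in> M" using M A unfolding DG_def by blast
    then have "(u *\<^sub>R x1 + (u*t1) *\<^sub>R z, u*r1 + (u*t1)*c) \<in> E" by (rule memE)
    moreover have "(u *\<^sub>R x, u * r) = (u *\<^sub>R x1 + (u*t1) *\<^sub>R z, u*r1 + (u*t1)*c)"
      using A by (simp add: algebra_simps)
    ultimately show "(u *\<^sub>R x, u * r) \<in> E" by simp
  next
    fix x r
    assume "(x, r) \<in> E"
    then obtain x1 r1 t where A0: "(x,r) = (x1 + t *\<^sub>R z, r1 + t*c)" and A: "(x1,r1)\<in>M" using inE by metis
    have xr: "x = x1 + t *\<^sub>R z" "r = r1 + t*c" using A0 by simp_all
    consider "t > 0" | "t = 0" | "t < 0" by linarith
    then show "r \<le> q x"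
    proof cases
      case 1
      have "c \<le> (q (x1 + t *\<^sub>R z) - r1) / t" by (rule cu[OF memU[OF A 1]])
      then have "t * c \<le> q (x1 + t *\<^sub>R z) - r1" using 1 by (simp add: field_simps)
      then show ?thesis unfolding xr by simp
    next
      case 2
      have "r1 \<le> q x1" using A M unfolding DG_def by blast
      then show ?thesis unfolding xr using 2 by simp
    next
      case 3
      then have "-t > 0" by simp
      have "(r1 - q (x1 - (-t) *\<^sub>R z)) / (-t) \<le> c" by (rule cl[OF memL[OF A \<open>-t > 0\<close>]])
      then have "r1 - q (x1 + t *\<^sub>R z) \<le> (-t) * c" using 3 by (simp add: field_simps)
      then show ?thesis unfolding xr by simp
    qed
  qed
  then show ?thesis unfolding E_def by blast
qed
lemma hahn_banach_convex:
  fixes q :: "'a::real_vector \<Rightarrow> real"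
  assumes q: "convex_on UNIV q" and q0: "q 0 \<ge> 0"
  shows "\<exists>f. (\<forall>x y. f (x+y) = f x + f y) \<and> (\<forall>c x. f (c *\<^sub>R x) = c * f x) \<and> (\<forall>x. f x \<le> q x)"
proof -
  have "\<exists>M\<in>{G. DG q G}. \<forall>X\<in>{G. DG q G}. M \<subseteq> X \<longrightarrow> X = M"
  proof (rule Zorn_Lemma2, intro ballI)
    fix C assume C: "C \<in> chains {G. DG q G}"
    show "\<exists>U\<in>{G. DG q G}. \<forall>X\<in>C. X \<subseteq> U"
    proof (cases "C = {}")
      case True
      have "DG q {(0,0)}" unfolding DG_def using q0 by simp
      then show ?thesis using True by blast
    next
      case False then show ?thesis using DG_chain[OF C] by blast
    qed
  qed
  then obtain M where M: "DG q M" and max: "\<And>X. DG q X \<Longrightarrow> M \<subseteq> X \<Longrightarrow> X = M" by blast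
  have ex: "\<exists>r. (z,r) \<in> M" for z
  proof -
    obtain c where c: "DG q {(x + t *\<^sub>R z, r + t*c) | x r t. (x,r)\<in>M}"
      using DG_extend[OF q M] by blast
    have "M \<subseteq> {(x + t *\<^sub>R z, r + t*c) | x r t. (x,r)\<in>M}"
    proof
      fix p assume "p \<in> M"
      then obtain x r where p: "p = (x,r)" "(x,r) \<in> M" by (cases p) auto
      show "p \<in> {(x + t *\<^sub>R z, r + t*c) | x r t. (x,r)\<in>M}"
        by (rule CollectI, rule exI[of _ x], rule exI[of _ r], rule exI[of _ 0]) (use p in simp)
    qed
    with max c have eq: "{(x + t *\<^sub>R z, r + t*c) | x r t. (x,r)\<in>M} = M" by blast
    have "(0,0) \<in> M" using M unfolding DG_def by blast
    then have "(z, c) \<in> {(x + t *\<^sub>R z, r + t*c) | x r t. (x,r)\<in>M}"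
      by (intro CollectI exI[of _ 0] exI[of _ 1]) simp
    then show ?thesis using eq by blast
  qed
  have uniq: "r = s" if "(z,r) \<in> M" "(z,s) \<in> M" for z r s
  proof -
    have "((-1) *\<^sub>R z, (-1) * s) \<in> M" using M that unfolding DG_def by blast
    then have "(z + (-1) *\<^sub>R z, r + (-1) * s) \<in> M" using M that unfolding DG_def by blast
    then have d: "(0, r - s) \<in> M" by simp
    have tb: "\<And>t. t * (r - s) \<le> q 0"
    proof -
      fix t
      have "(t *\<^sub>R 0, t * (r-s)) \<in> M" using M d unfolding DG_def by blast
      then show "t * (r - s) \<le> q 0" using M unfolding DG_def by simp
    qed
    show "r = s"
    proof (rule ccontr)
      assume "r \<noteq> s"
      then have e: "((q 0 + 1)/(r-s)) * (r-s) = q 0 + 1" by simp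
      have "((q 0 + 1)/(r-s)) * (r-s) \<le> q 0" by (rule tb)
      then show False unfolding e by simp
    qed
  qed
  define f where "f z = (THE r. (z,r) \<in> M)" for z
  have fM: "(z, f z) \<in> M" for z
  proof -
    obtain r where r: "(z,r) \<in> M" using ex by blast
    have "f z = r" unfolding f_def by (rule the_equality) (use r uniq in blast)+
    then show ?thesis using r by simp
  qed
  show ?thesis
  proof (intro exI[of _ f] conjI allI)
    fix x y
    have "(x+y, f x + f y) \<in> M" using M fM unfolding DG_def by blast
    then show "f (x+y) = f x + f y" using uniq fM by blast
  next
    fix c x
    have "(c *\<^sub>R x, c * f x) \<in> M" using M fM unfolding DG_def by blast
    then show "f (c *\<^sub>R x) = c * f x" using uniq fM by blast
  next
    fix x show "f x \<le> q x" using M fM unfolding DG_def by blast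
  qed
qed


lemma subgrad_exists:
  fixes \<phi> :: "'a::real_normed_vector \<Rightarrow> real"
  assumes cvx: "convex_on UNIV \<phi>" and cont: "continuous_on UNIV \<phi>"
  shows "\<exists>f. bounded_linear f \<and> (\<forall>z. f z \<le> \<phi> (y+z) - \<phi> y)"
proof -
  define q where "q z = \<phi> (y+z) - \<phi> y" for z
  have qc: "convex_on UNIV q"
  proof (rule convex_onI)
    fix t :: real and a b :: 'a assume t: "0 < t" "t < 1"
    have e: "y + ((1-t) *\<^sub>R a + t *\<^sub>R b) = (1-t) *\<^sub>R (y+a) + t *\<^sub>R (y+b)"
      by (simp add: algebra_simps)
    have "\<phi> (y + ((1-t) *\<^sub>R a + t *\<^sub>R b)) \<le> (1-t) * \<phi> (y+a) + t * \<phi> (y+b)"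
      unfolding e using convex_onD[OF cvx, of t] t by simp
    then show "q ((1-t) *\<^sub>R a + t *\<^sub>R b) \<le> (1-t) * q a + t * q b"
      by (simp add: q_def algebra_simps)
  qed simp
  obtain f where fadd: "\<And>a b. f (a+b) = f a + f b" and fsc: "\<And>c a. f (c *\<^sub>R a) = c * f a"
    and fle: "\<And>a. f a \<le> q a"
    using hahn_banach_convex[OF qc] unfolding q_def by force
  obtain d where d: "d > 0" "\<And>w. dist w y < d \<Longrightarrow> dist (\<phi> w) (\<phi> y) < 1"
    using cont unfolding continuous_on_iff by (metis UNIV_I zero_less_one)
  have small: "f z \<le> 1" if "norm z < d" for z
  proof -
    have "dist (y+z) y < d" using that by (simp add: dist_norm)
    then have "\<bar>\<phi> (y+z) - \<phi> y\<bar> < 1" using d(2) by (simp add: dist_real_def)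
    then have "\<phi> (y+z) - \<phi> y < 1" by linarith
    then show ?thesis using fle[of z] by (simp add: q_def)
  qed
  have bound: "norm (f a) \<le> norm a * (2/d)" for a
  proof (cases "a = 0")
    case True
    have "f 0 = 0" using fsc[of 0 0] by simp
    then show ?thesis using True by simp
  next
    case False
    define k where "k = d / (2 * norm a)"
    have k: "k > 0" using False d by (simp add: k_def)
    have nz: "norm (k *\<^sub>R a) < d" "norm ((-k) *\<^sub>R a) < d"
      using False d by (simp_all add: k_def)
    have "f (k *\<^sub>R a) \<le> 1" "f ((-k) *\<^sub>R a) \<le> 1" by (rule small[OF nz(1)], rule small[OF nz(2)])
    then have "k * f a \<le> 1" "-k * f a \<le> 1" by (simp_all only: fsc)
    then have "\<bar>f a\<bar> \<le> 1 / k" using k by (simp add: field_simps abs_le_iff)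
    also have "1/k = norm a * (2/d)" using False d by (simp add: k_def field_simps)
    finally show ?thesis by simp
  qed
  have "bounded_linear f"
    by (rule bounded_linear_intro[where K="2/d"], rule fadd, simp add: fsc, rule bound)
  then show ?thesis using fle unfolding q_def by blast
qed

lemma subgrad_slope:
  fixes \<phi> :: "'a::real_normed_vector \<Rightarrow> real"
  assumes cvx: "convex_on UNIV \<phi>" and lin: "bounded_linear \<zeta>"
    and sg: "\<And>z. \<zeta> z \<le> \<phi> (y+z) - \<phi> y"
    and up: "\<And>t. t \<ge> 0 \<Longrightarrow> \<phi> (x + t *\<^sub>R v) \<le> A + c*t"
  shows "\<zeta> v \<le> c"
proof (rule ccontr)
  assume nle: "\<not> \<zeta> v \<le> c"
  define K where "K = \<phi> (2 *\<^sub>R y - x)/2 + A/2 - \<phi> y"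
  have key: "s * (\<zeta> v - c) \<le> K" if s: "s > 0" for s
  proof -
    have "s * \<zeta> v = \<zeta> (s *\<^sub>R v)" using lin by (simp add: linear_simps)
    also have "\<dots> \<le> \<phi> (y + s *\<^sub>R v) - \<phi> y" by (rule sg)
    also have "y + s *\<^sub>R v = (1 - 1/2) *\<^sub>R (2 *\<^sub>R y - x) + (1/2) *\<^sub>R (x + (2 * s) *\<^sub>R v)"
      by (simp add: algebra_simps)
    also have "\<phi> \<dots> \<le> (1 - 1/2) * \<phi> (2 *\<^sub>R y - x) + (1/2) * \<phi> (x + (2 * s) *\<^sub>R v)"
      using convex_onD[OF cvx, of "1/2"] by simp
    also have "\<dots> \<le> (1 - 1/2) * \<phi> (2 *\<^sub>R y - x) + (1/2) * (A + c * (2 * s))"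
      using up[of "2 * s"] s by simp
    finally show ?thesis by (simp add: K_def algebra_simps)
  qed
  define s where "s = (\<bar>K\<bar> + 1) / (\<zeta> v - c)"
  have "s > 0" using nle by (simp add: s_def add_pos_nonneg)
  moreover have "s * (\<zeta> v - c) = \<bar>K\<bar> + 1" using nle by (simp add: s_def)
  ultimately show False using key[of s] by linarith
qed

lemma line_growth:
  fixes \<phi> :: "'a::real_normed_vector \<Rightarrow> real"
  assumes cvx: "convex_on UNIV \<phi>" and lin: "bounded_linear \<xi>"
    and t12: "t1 < t2"
    and lt: "\<phi> (x + t1 *\<^sub>R v) - \<xi> (x + t1 *\<^sub>R v) < \<phi> (x + t2 *\<^sub>R v) - \<xi> (x + t2 *\<^sub>R v)"
  shows "filterlim (\<lambda>t. \<phi> (x + t *\<^sub>R v) - \<xi> (x + t *\<^sub>R v)) at_top at_top"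
proof -
  define h where "h t = \<phi> (x + t *\<^sub>R v) - \<xi> (x + t *\<^sub>R v)" for t
  have hxi: "\<xi> (x + t *\<^sub>R v) = \<xi> x + t * \<xi> v" for t using lin by (simp add: linear_simps)
  define \<delta> where "\<delta> = (h t2 - h t1) / (t2 - t1)"
  have \<delta>: "\<delta> > 0" using lt t12 by (simp add: \<delta>_def h_def)
  have grow: "h t \<ge> h t1 + (t - t1) * \<delta>" if t: "t > t2" for t
  proof -
    define \<mu> where "\<mu> = (t2 - t1) / (t - t1)"
    have \<mu>: "\<mu> > 0" "\<mu> < 1" using t t12 by (simp_all add: \<mu>_def field_simps)
    have ne: "t - t1 \<noteq> 0" "t2 - t1 \<noteq> 0" using t t12 by auto
    have m1: "\<mu> * (t - t1) = t2 - t1" using ne by (simp add: \<mu>_def)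
    have "(1-\<mu>) * t1 + \<mu> * t = t1 + \<mu> * (t - t1)" by (simp add: algebra_simps)
    then have tt: "(1-\<mu>) * t1 + \<mu> * t = t2" using m1 by simp
    have e: "x + t2 *\<^sub>R v = (1-\<mu>) *\<^sub>R (x + t1 *\<^sub>R v) + \<mu> *\<^sub>R (x + t *\<^sub>R v)"
    proof -
      have "(1-\<mu>) *\<^sub>R (x + t1 *\<^sub>R v) + \<mu> *\<^sub>R (x + t *\<^sub>R v) = x + ((1-\<mu>) * t1 + \<mu> * t) *\<^sub>R v"
        by (simp add: algebra_simps)
      then show ?thesis using tt by simp
    qed
    have "\<phi> (x + t2 *\<^sub>R v) \<le> (1-\<mu>) * \<phi> (x + t1 *\<^sub>R v) + \<mu> * \<phi> (x + t *\<^sub>R v)"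
      unfolding e using convex_onD[OF cvx, of \<mu>] \<mu> by simp
    moreover have "\<xi> (x + t2 *\<^sub>R v) = (1-\<mu>) * \<xi> (x + t1 *\<^sub>R v) + \<mu> * \<xi> (x + t *\<^sub>R v)"
      unfolding hxi
    proof -
      have "t2 * \<xi> v = ((1-\<mu>) * t1 + \<mu> * t) * \<xi> v" using tt by simp
      then show "\<xi> x + t2 * \<xi> v = (1 - \<mu>) * (\<xi> x + t1 * \<xi> v) + \<mu> * (\<xi> x + t * \<xi> v)"
        by (simp add: algebra_simps)
    qed
    ultimately have "h t2 \<le> (1-\<mu>) * h t1 + \<mu> * h t" by (simp add: h_def algebra_simps)
    then have "h t2 - h t1 \<le> \<mu> * (h t - h t1)" by (simp add: algebra_simps)
    then have "(h t2 - h t1) / \<mu> \<le> h t - h t1" using \<mu> by (simp add: field_simps)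
    moreover have "(h t2 - h t1) / \<mu> = (t - t1) * \<delta>" using ne by (simp add: \<mu>_def \<delta>_def field_simps)
    ultimately show ?thesis by simp
  qed
  have "\<forall>Z. eventually (\<lambda>t. Z \<le> h t) at_top"
  proof
    fix Z
    show "eventually (\<lambda>t. Z \<le> h t) at_top" unfolding eventually_at_top_linorder
    proof (intro exI allI impI)
      fix t assume t: "t \<ge> max (t2+1) (t1 + (Z - h t1)/\<delta>)"
      then have "t > t2" by simp
      have "(Z - h t1) / \<delta> \<le> t - t1" using t by simp
      then have "Z - h t1 \<le> (t - t1) * \<delta>" using \<delta> by (simp add: field_simps)
      then show "Z \<le> h t" using grow[OF \<open>t > t2\<close>] by simp
    qed
  qed
  then show ?thesis unfolding filterlim_at_top h_def by simp
qed


theorem mainTheorem7: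
  fixes \<phi> :: "'a::banach \<Rightarrow> real" and a :: real
  assumes sep: "separable_space (euclidean :: 'a topology)"
    and cont: "continuous_on UNIV \<phi>"
    and cvx: "convex_on UNIV \<phi>"
    and lower: "\<And>x. \<phi> x \<ge> a"
    and nonconst: "\<not> (\<exists>x v. v \<noteq> 0 \<and> (\<exists>c. \<forall>t::real. \<phi> (x + t *\<^sub>R v) = c))"
  shows "\<exists>\<xi> :: 'a \<Rightarrow> real. bounded_linear \<xi> \<and>
           (\<forall>x v. v \<noteq> 0 \<longrightarrow>
              filterlim (\<lambda>t::real. \<phi> (x + t *\<^sub>R v) - \<xi> (x + t *\<^sub>R v)) at_top at_top)"
proof -
  obtain C :: "'a set" where C: "countable C" "closure C = UNIV"
    using sep unfolding separable_space_def by auto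
  have Cne: "C \<noteq> {}" using C(2) by auto
  define e where "e = from_nat_into C"
  have re: "range e = C" using Cne C(1) by (simp add: e_def)
  have "\<forall>n. \<exists>f. bounded_linear f \<and> (\<forall>z. f z \<le> \<phi> (e n + z) - \<phi> (e n))"
    using subgrad_exists[OF cvx cont] by blast
  then obtain F where Fl: "\<And>n. bounded_linear (F n)"
    and Fs: "\<And>n z. F n z \<le> \<phi> (e n + z) - \<phi> (e n)" by metis
  have "\<forall>n. \<exists>K. K \<ge> 1 \<and> (\<forall>x::'a. \<bar>F n x\<bar> \<le> norm x * K)"
  proof
    fix n
    obtain K where K: "K > 0" "\<And>x. norm (F n x) \<le> norm x * K"
      using bounded_linear.pos_bounded[OF Fl[of n]] by blast
    show "\<exists>K. K \<ge> 1 \<and> (\<forall>x::'a. \<bar>F n x\<bar> \<le> norm x * K)"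
    proof (intro exI[of _ "max K 1"] conjI allI)
      fix x :: 'a
      have "norm x * K \<le> norm x * max K 1" by (intro mult_left_mono) auto
      then show "\<bar>F n x\<bar> \<le> norm x * max K 1" using K(2)[of x] by simp
    qed simp
  qed
  then obtain K where K1: "\<And>n. K n \<ge> 1" and KF: "\<And>n x. \<bar>F n x\<bar> \<le> norm x * K n" by metis
  define w where "w n = (1/2)^n / (4 * K n)" for n
  have wpos: "w n > 0" for n using K1[of n] by (simp add: w_def)
  have wle: "w n \<le> (1/4) * (1/2)^n" for n
    using K1[of n] by (simp add: w_def field_simps)
  have geo: "summable (\<lambda>n. c * (1/2::real)^n)" for c
    by (intro summable_mult summable_geometric) simp
  have geos: "(\<Sum>n. c * (1/2::real)^n) = 2 * c" for c
    by (subst suminf_mult) (auto simp: suminf_geometric)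
  have tb: "norm (w n * F n x) \<le> norm x / 4 * (1/2)^n" for n and x :: 'a
  proof -
    have "norm (w n * F n x) = w n * \<bar>F n x\<bar>" using wpos[of n] by (simp add: abs_mult)
    also have "\<dots> \<le> w n * (norm x * K n)" using KF wpos[of n] by (intro mult_left_mono) auto
    also have "\<dots> = norm x / 4 * (1/2)^n" using K1[of n] by (simp add: w_def field_simps)
    finally show ?thesis .
  qed
  have summ: "summable (\<lambda>n. w n * F n x)" for x :: 'a
    by (rule summable_comparison_test'[OF geo[of "norm x / 4"]]) (rule tb)
  have wsum: "summable w"
    by (rule summable_comparison_test'[OF geo[of "1/4"]]) (use wle wpos in \<open>auto simp: less_imp_le\<close>)
  have S: "suminf w \<le> 1/2"
  proof -
    have "suminf w \<le> (\<Sum>n. (1/4) * (1/2::real)^n)" by (rule suminf_le[OF wle wsum geo])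
    then show ?thesis using geos[of "1/4"] by simp
  qed
  define \<xi> where "\<xi> x = (\<Sum>n. w n * F n x)" for x :: 'a
  have xadd: "\<xi> (x + y) = \<xi> x + \<xi> y" for x y :: 'a
  proof -
    have "\<xi> (x + y) = (\<Sum>n. w n * F n x + w n * F n y)"
      unfolding \<xi>_def using Fl by (simp add: linear_simps distrib_left)
    also have "\<dots> = \<xi> x + \<xi> y" unfolding \<xi>_def by (rule suminf_add[OF summ summ, symmetric])
    finally show ?thesis .
  qed
  have xsc: "\<xi> (r *\<^sub>R x) = r *\<^sub>R \<xi> x" for r and x :: 'a
  proof -
    have "\<xi> (r *\<^sub>R x) = (\<Sum>n. r * (w n * F n x))"
      unfolding \<xi>_def using Fl by (simp add: linear_simps algebra_simps)
    also have "\<dots> = r * \<xi> x" unfolding \<xi>_def by (rule suminf_mult[OF summ])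
    finally show ?thesis by simp
  qed
  have xb: "norm (\<xi> x) \<le> norm x * (1/2)" for x :: 'a
  proof -
    have tb': "w n * F n x \<le> norm x / 4 * (1/2)^n" "- (w n * F n x) \<le> norm x / 4 * (1/2)^n" for n
      using tb[of n x] by (auto simp: abs_le_iff)
    have "\<xi> x \<le> (\<Sum>n. norm x / 4 * (1/2)^n)" unfolding \<xi>_def
      by (rule suminf_le[OF tb'(1) summ geo])
    moreover have "- \<xi> x \<le> (\<Sum>n. norm x / 4 * (1/2)^n)" unfolding \<xi>_def suminf_minus[OF summ, symmetric]
      by (rule suminf_le[OF tb'(2) summable_minus[OF summ] geo])
    ultimately show ?thesis using geos[of "norm x / 4"] by (simp add: abs_le_iff)
  qed
  have blin: "bounded_linear \<xi>"
    by (rule bounded_linear_intro[where K="1/2"]) (use xadd xsc xb in auto)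
  show ?thesis
  proof (intro exI[of _ \<xi>] conjI blin allI impI)
    fix x v :: 'a assume v: "v \<noteq> 0"
    define c where "c = \<xi> v"
    have lin: "\<xi> (x + t *\<^sub>R v) = \<xi> x + t * c" for t using blin by (simp add: linear_simps c_def)
    show "filterlim (\<lambda>t. \<phi> (x + t *\<^sub>R v) - \<xi> (x + t *\<^sub>R v)) at_top at_top"
    proof (rule ccontr)
      assume nt: "\<not> ?thesis"
      have mono: "\<phi> (x + t2 *\<^sub>R v) - \<xi> (x + t2 *\<^sub>R v) \<le> \<phi> (x + t1 *\<^sub>R v) - \<xi> (x + t1 *\<^sub>R v)"
        if "t1 < t2" for t1 t2
        using line_growth[OF cvx blin that] nt by force
      have up: "\<phi> (x + t *\<^sub>R v) \<le> \<phi> x + c * t" if "t \<ge> 0" for t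
      proof (cases "t = 0")
        case True then show ?thesis by simp
      next
        case False
        then have "\<phi> (x + t *\<^sub>R v) - \<xi> (x + t *\<^sub>R v) \<le> \<phi> (x + 0 *\<^sub>R v) - \<xi> (x + 0 *\<^sub>R v)"
          using that by (intro mono) simp
        then show ?thesis unfolding lin by (simp add: algebra_simps)
      qed
      have c0: "c \<ge> 0"
      proof (rule ccontr)
        assume "\<not> c \<ge> 0"
        define t where "t = (\<phi> x - a + 1) / (- c)"
        have "\<phi> x \<ge> a" by (rule lower)
        then have t0: "t \<ge> 0" unfolding t_def using \<open>\<not> c \<ge> 0\<close> by (intro divide_nonneg_pos) auto
        have "c * t = - (\<phi> x - a + 1)" using \<open>\<not> c \<ge> 0\<close> by (simp add: t_def)
        then show False using up[OF t0] lower[of "x + t *\<^sub>R v"] by linarith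
      qed
      have Fc: "F m v \<le> c" for m
        by (rule subgrad_slope[OF cvx Fl Fs up])
      have "c = (\<Sum>m. w m * F m v)" by (simp add: c_def \<xi>_def)
      also have "\<dots> \<le> (\<Sum>m. w m * c)"
        by (rule suminf_le) (use Fc wpos summ summable_mult2[OF wsum] in \<open>auto intro: mult_left_mono less_imp_le\<close>)
      also have "\<dots> = suminf w * c" by (rule suminf_mult2[OF wsum, symmetric])
      also have "\<dots> \<le> (1/2) * c" using S c0 by (intro mult_right_mono) auto
      finally have cz: "c = 0" using c0 by simp
      have dec: "\<phi> (x + t2 *\<^sub>R v) \<le> \<phi> (x + t1 *\<^sub>R v)" if "t1 < t2" for t1 t2
        using mono[OF that] unfolding lin cz by simp
      obtain t where t: "\<phi> (x + t *\<^sub>R v) \<noteq> \<phi> x"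
        using nonconst v by (metis add.right_neutral scale_zero_left)
      obtain t1 t2 where t12: "t1 < t2" "\<phi> (x + t2 *\<^sub>R v) < \<phi> (x + t1 *\<^sub>R v)"
      proof (cases "t > 0")
        case True
        then show ?thesis using that[of 0 t] dec[OF True] t by force
      next
        case False
        then have "t < 0" using t by (cases "t = 0") auto
        then show ?thesis using that[of t 0] dec[OF \<open>t < 0\<close>] t by force
      qed
      define d where "d = (t2 - t1) *\<^sub>R v"
      define U where "U = {y. \<phi> (y + d) < \<phi> y}"
      have cd: "continuous_on UNIV (\<lambda>y. \<phi> (y + d))"
        by (rule continuous_on_compose2[OF cont]) (auto intro: continuous_intros)
      have oU: "open U" unfolding U_def by (rule open_Collect_less[OF cd cont])
      have "(x + t1 *\<^sub>R v) + d = x + t2 *\<^sub>R v" by (simp add: d_def algebra_simps)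
      then have "x + t1 *\<^sub>R v \<in> U" using t12 unfolding U_def by (simp only: mem_Collect_eq)
      then have "U \<inter> closure C \<noteq> {}" using C(2) by auto
      then have "U \<inter> C \<noteq> {}" using open_Int_closure_eq_empty[OF oU] by blast
      then obtain n where n: "e n \<in> U" using re by blast
      have "F n d < 0" using Fs[of n d] n by (simp add: U_def)
      moreover have "F n d = (t2 - t1) * F n v" using Fl[of n] by (simp add: d_def linear_simps)
      ultimately have Fn: "F n v < 0" using t12(1) by (simp add: mult_less_0_iff)
      have si: "(\<lambda>m. if m = n then w m * F m v else 0) sums (w n * F n v)" by (rule sums_single)
      have "c = (\<Sum>m. w m * F m v)" by (simp add: c_def \<xi>_def)
      also have "\<dots> \<le> (\<Sum>m. if m = n then w m * F m v else 0)"
      proof (rule suminf_le[OF _ summ sums_summable[OF si]])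
        fix m
        have "w m * F m v \<le> 0" using Fc[of m] cz wpos[of m] by (simp add: mult_nonneg_nonpos less_imp_le)
        then show "w m * F m v \<le> (if m = n then w m * F m v else 0)" by simp
      qed
      also have "\<dots> = w n * F n v" using sums_unique[OF si] by simp
      also have "\<dots> < 0" using wpos[of n] Fn by (simp add: mult_pos_neg)
      finally show False using cz by simp
    qed
  qed
qed

end
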